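(* Let $\mathbf{Y}$ be a Euclidean space, let $M,Q\subset\mathbf{Y}$ be nonempty closed sets, and let $\bar y \in M\cap Q$. Suppose that $M$ intersects $Q$ separably at $\bar y$ and that $M$ is super-regular at $\bar y$. Let $\Phi$ be a faithful approximation of the projection onto $M$ around $\bar y$. Then for every starting point $z^0 \in M$ sufficiently close to $\bar y$, the approximate alternating projection iteration \[ z^{k+1} = \Phi(z^k, y^k)\quad\text{for any } y^k \in P_Q(z^k), \qquad k=0,1,2,\ldots \] converges linearly to a point in the intersection $M\cap Q$.
   Context: For a nonempty closed set $S\subset\mathbf{Y}$, $P_S(z)$ is the (possibly multivalued) set of nearest points of $S$ to $z$. The set $M$ intersects $Q$ separably at $\bar y\in M\cap Q$ if there exists an angle $\alpha>0$ such that for any point $z\in M\setminus Q$ sufficiently close to $\bar y$ and any points $x\in P_Q(z)\setminus M$ and $z'\in P_M(x)$, the angle between the vectors $z-x$ and $z'-x$ is at least $\alpha$. The set $M$ is super-regular at $\bar y$ if, given any angle $\gamma>0$, for any points $z\in M$ and $x\notin M$ sufficiently close to $\bar y$ and any point $z'\in P_M(x)$ with $z'\neq z$, the angle between $z-z'$ and $x-z'$ is at least $\frac{\pi}{2}-\gamma$. A faithful approximation of the projection onto $M$ around $\bar y$ is a map $\Phi\colon V\times\mathbf{Y}\to M$, where $V$ is a neighborhood of $\bar y$ in $M$, such that: given any $\epsilon>0$ and angle $\alpha>0$, if points $z\in M$ and $y\notin M$ are sufficiently close to $\bar y$, then any point $\hat z\in P_M(y)$ such that the angle between $z-y$ and $\hat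 z-y$ is at least $\alpha$ satisfies $|\hat z-\Phi(z,y)|\le\epsilon|y-z|$. A sequence $(z^k)$ converges linearly to $\hat z$ if there exist constants $c\in(0,1)$ and $\rho>0$ with $|z^k-\hat z|<\rho c^k$ for all $k$. *)

theory Defs
  imports "HOL-Analysis.Analysis"
begin

definition proj_set :: "'a::euclidean_space set \<Rightarrow> 'a \<Rightarrow> 'a set" where
  "proj_set S z = {x \<in> S. \<forall>w\<in>S. dist z x \<le> dist z w}"

text \<open>Angle between two vectors (only used for nonzero vectors).\<close>
definition vec_angle :: "'a::euclidean_space \<Rightarrow> 'a \<Rightarrow> real" where
  "vec_angle u v = arccos ((u \<bullet> v) / (norm u * norm v))"

definition intersects_separably :: "'a::euclidean_space set \<Rightarrow> 'a set \<Rightarrow> 'a \<Rightarrow> bool" where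
  "intersects_separably M Q ybar \<longleftrightarrow>
     (\<exists>\<alpha>>0. \<exists>\<delta>>0. \<forall>z \<in> M - Q. dist z ybar < \<delta> \<longrightarrow>
        (\<forall>x \<in> proj_set Q z - M. \<forall>z' \<in> proj_set M x. vec_angle (z - x) (z' - x) \<ge> \<alpha>))"

definition super_regular :: "'a::euclidean_space set \<Rightarrow> 'a \<Rightarrow> bool" where
  "super_regular M ybar \<longleftrightarrow>
     (\<forall>\<gamma>>0. \<exists>\<delta>>0. \<forall>z \<in> M. \<forall>x. x \<notin> M \<longrightarrow> dist z ybar < \<delta> \<longrightarrow> dist x ybar < \<delta> \<longrightarrow>
        (\<forall>z' \<in> proj_set M x. z' \<noteq> z \<longrightarrow> vec_angle (z - z') (x - z') \<ge> pi / 2 - \<gamma>))"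

text \<open>\<open>Phi\<close> restricted to \<open>V \<times> Y\<close> is a faithful approximation of the projection onto M
  around ybar, where V is a neighborhood of ybar in M.\<close>
definition faithful_approx :: "'a::euclidean_space set \<Rightarrow> 'a set \<Rightarrow> ('a \<Rightarrow> 'a \<Rightarrow> 'a) \<Rightarrow> 'a \<Rightarrow> bool" where
  "faithful_approx M V Phi ybar \<longleftrightarrow>
     V \<subseteq> M \<and> (\<exists>e>0. M \<inter> ball ybar e \<subseteq> V) \<and>
     (\<forall>z \<in> V. \<forall>y. Phi z y \<in> M) \<and>
     (\<forall>\<epsilon>>0. \<forall>\<alpha>>0. \<exists>\<delta>>0. \<forall>z \<in> M. \<forall>y. y \<notin> M \<longrightarrow> dist z ybar < \<delta> \<longrightarrow> dist y ybar < \<delta> \<longrightarrow>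
        (\<forall>zh \<in> proj_set M y. vec_angle (z - y) (zh - y) \<ge> \<alpha> \<longrightarrow>
           norm (zh - Phi z y) \<le> \<epsilon> * norm (y - z)))"

definition converges_linearly :: "(nat \<Rightarrow> 'a::euclidean_space) \<Rightarrow> 'a \<Rightarrow> bool" where
  "converges_linearly zs zh \<longleftrightarrow>
     (\<exists>c \<rho>. 0 < c \<and> c < 1 \<and> 0 < \<rho> \<and> (\<forall>k. norm (zs k - zh) < \<rho> * c ^ k))"

end

theory Submission imports Defs begin

lemma tri3: "norm ((x::'a::real_normed_vector) - z) \<le> norm (x - y) + norm (y - z)"
  using norm_triangle_ineq[of "x - y" "y - z"] by simp

lemma angle_le:
  fixes u v :: "'a::euclidean_space"
  assumes "u \<noteq> 0" "v \<noteq> 0" "0 \<le> a" "a \<le> pi" "vec_angle u v \<ge> a"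
  shows "u \<bullet> v \<le> cos a * (norm u * norm v)"
proof -
  define t where "t = (u \<bullet> v) / (norm u * norm v)"
  have np: "norm u * norm v > 0" using assms by simp
  have cs: "\<bar>u \<bullet> v\<bar> \<le> norm u * norm v" by (rule Cauchy_Schwarz_ineq2)
  have t1: "-1 \<le> t" "t \<le> 1" using np cs unfolding t_def
    by (auto simp: abs_le_iff divide_le_eq le_divide_eq)
  have "arccos t \<ge> a" using assms(5) unfolding vec_angle_def t_def .
  hence "cos (arccos t) \<le> cos a" using assms arccos_lbound[OF t1] arccos_ubound[OF t1]
    by (subst cos_mono_le_eq) auto
  hence "t \<le> cos a" using cos_arccos t1 by simp
  thus ?thesis using np unfolding t_def by (simp add: divide_le_eq)
qed

lemma geom:
  fixes z y z' :: "'a::euclidean_space"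
  assumes n: "norm (z' - y) \<le> norm (z - y)"
    and i1: "(z - y) \<bullet> (z' - y) \<le> C * (norm (z - y) * norm (z' - y))"
    and i2: "(z - z') \<bullet> (y - z') \<le> s * (norm (z - z') * norm (y - z'))"
    and "0 \<le> s" "0 \<le> C"
  shows "norm (z' - y) \<le> (C + 2 * s) * norm (z - y)"
proof -
  define a where "a = z - y"
  define b where "b = z' - y"
  have e1: "z - z' = a - b" "y - z' = - b" unfolding a_def b_def by auto
  have e: "(a - b) \<bullet> (-b) = norm b ^ 2 - a \<bullet> b"
    by (simp add: inner_diff_left inner_diff_right power2_norm_eq_inner inner_commute)
  have tri: "norm (a - b) \<le> norm a + norm b" by (rule norm_triangle_ineq4)
  have nb: "norm b \<le> norm a" using n unfolding a_def b_def .
  have "norm b ^ 2 \<le> C * (norm a * norm b) + s * (norm (a - b) * norm b)"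
    using i1 i2 e unfolding e1 a_def[symmetric] b_def[symmetric] by simp
  also have "\<dots> \<le> C * (norm a * norm b) + s * ((norm a + norm b) * norm b)"
    using tri assms(4) by (intro add_left_mono mult_left_mono mult_right_mono) auto
  also have "\<dots> \<le> C * (norm a * norm b) + s * ((2 * norm a) * norm b)"
    using nb assms(4) by (intro add_left_mono mult_left_mono mult_right_mono) auto
  finally have "norm b * norm b \<le> ((C + 2 * s) * norm a) * norm b"
    by (simp add: power2_eq_square algebra_simps)
  hence "norm b \<le> (C + 2 * s) * norm a \<or> norm b = 0"
    by (metis mult_right_le_imp_le norm_ge_zero order_le_less)
  thus ?thesis unfolding a_def b_def using assms by (auto intro: mult_nonneg_nonneg)
qed

theorem mainTheorem3:
  fixes M Q V :: "'a::euclidean_space set" and ybar :: 'a and Phi :: "'a \<Rightarrow> 'a \<Rightarrow> 'a"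
  assumes "closed M" "M \<noteq> {}" "closed Q" "Q \<noteq> {}"
    and "ybar \<in> M \<inter> Q"
    and "intersects_separably M Q ybar"
    and "super_regular M ybar"
    and "faithful_approx M V Phi ybar"
  shows "\<exists>\<delta>>0. \<forall>zs :: nat \<Rightarrow> 'a. zs 0 \<in> M \<longrightarrow> dist (zs 0) ybar < \<delta> \<longrightarrow>
           (\<forall>k. \<exists>y \<in> proj_set Q (zs k).
                  zs (Suc k) = (if y \<in> M then y else Phi (zs k) y)) \<longrightarrow>
           (\<exists>zh \<in> M \<inter> Q. converges_linearly zs zh)"
proof -
  obtain \<alpha> where a0: "\<alpha> > 0" and "\<exists>\<delta>>0. \<forall>z \<in> M - Q. dist z ybar < \<delta> \<longrightarrow>
        (\<forall>x \<in> proj_set Q z - M. \<forall>z' \<in> proj_set M x. vec_angle (z - x) (z' - x) \<ge> \<alpha>)"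
    using assms(6) unfolding intersects_separably_def by blast
  then obtain \<delta>1 where d1: "\<delta>1 > 0" and sep0: "\<forall>z \<in> M - Q. dist z ybar < \<delta>1 \<longrightarrow>
        (\<forall>x \<in> proj_set Q z - M. \<forall>z' \<in> proj_set M x. vec_angle (z - x) (z' - x) \<ge> \<alpha>)" by blast
  have sep: "vec_angle (z - x) (z' - x) \<ge> \<alpha>" if "z \<in> M - Q" "dist z ybar < \<delta>1"
        "x \<in> proj_set Q z - M" "z' \<in> proj_set M x" for z x z'
    using sep0 that by blast
  define a where "a = min \<alpha> 1"
  have a1: "0 < a" "a \<le> 1" using a0 unfolding a_def by auto
  have api: "a < pi / 2" using a1 pi_gt3 by linarith
  have ca0: "0 < cos a" using a1 api by (intro cos_gt_zero) auto
  have ca1: "cos a < 1" using a1 api cos_monotone_0_pi[of 0 a] by simp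
  define s where "s = (1 - cos a) / 8"
  define eps where "eps = (1 - cos a) / 4"
  define c where "c = (1 + cos a) / 2"
  have s0: "0 < s" "s \<le> 1/4" using ca0 ca1 unfolding s_def by auto
  have eps0: "0 < eps" using ca1 unfolding eps_def by auto
  have c0: "0 < c" "c < 1" using ca0 ca1 unfolding c_def by auto
  have ceq: "c = cos a + 2 * s + eps" unfolding c_def s_def eps_def by (simp add: field_simps)
  have "\<exists>\<delta>>0. \<forall>z \<in> M. \<forall>x. x \<notin> M \<longrightarrow> dist z ybar < \<delta> \<longrightarrow> dist x ybar < \<delta> \<longrightarrow>
        (\<forall>z' \<in> proj_set M x. z' \<noteq> z \<longrightarrow> vec_angle (z - z') (x - z') \<ge> pi / 2 - s)"
    using assms(7) s0 unfolding super_regular_def by simp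
  then obtain \<delta>2 where d2: "\<delta>2 > 0" and sr0: "\<forall>z \<in> M. \<forall>x. x \<notin> M \<longrightarrow> dist z ybar < \<delta>2 \<longrightarrow> dist x ybar < \<delta>2 \<longrightarrow>
        (\<forall>z' \<in> proj_set M x. z' \<noteq> z \<longrightarrow> vec_angle (z - z') (x - z') \<ge> pi / 2 - s)" by blast
  have sr: "vec_angle (z - z') (x - z') \<ge> pi / 2 - s" if "z \<in> M" "x \<notin> M" "dist z ybar < \<delta>2"
       "dist x ybar < \<delta>2" "z' \<in> proj_set M x" "z' \<noteq> z" for z x z'
    using sr0 that by blast
  obtain e where e0: "e > 0" and eV: "M \<inter> ball ybar e \<subseteq> V" and PhiM: "\<And>z y. z \<in> V \<Longrightarrow> Phi z y \<in> M"
    using assms(8) unfolding faithful_approx_def by blast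
  have "\<forall>\<epsilon>>0. \<forall>\<alpha>>0. \<exists>\<delta>>0. \<forall>z \<in> M. \<forall>y. y \<notin> M \<longrightarrow> dist z ybar < \<delta> \<longrightarrow> dist y ybar < \<delta> \<longrightarrow>
        (\<forall>zh \<in> proj_set M y. vec_angle (z - y) (zh - y) \<ge> \<alpha> \<longrightarrow>
           norm (zh - Phi z y) \<le> \<epsilon> * norm (y - z))"
    using assms(8) unfolding faithful_approx_def by (elim conjE)
  then have "\<exists>\<delta>>0. \<forall>z \<in> M. \<forall>y. y \<notin> M \<longrightarrow> dist z ybar < \<delta> \<longrightarrow> dist y ybar < \<delta> \<longrightarrow>
        (\<forall>zh \<in> proj_set M y. vec_angle (z - y) (zh - y) \<ge> a \<longrightarrow>
           norm (zh - Phi z y) \<le> eps * norm (y - z))"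
    using eps0 a1 by simp
  then obtain \<delta>3 where d3: "\<delta>3 > 0" and fa0: "\<forall>z \<in> M. \<forall>y. y \<notin> M \<longrightarrow> dist z ybar < \<delta>3 \<longrightarrow> dist y ybar < \<delta>3 \<longrightarrow>
        (\<forall>zh \<in> proj_set M y. vec_angle (z - y) (zh - y) \<ge> a \<longrightarrow>
           norm (zh - Phi z y) \<le> eps * norm (y - z))" by blast
  have fa: "norm (zh - Phi z y) \<le> eps * norm (y - z)" if "z \<in> M" "y \<notin> M" "dist z ybar < \<delta>3"
      "dist y ybar < \<delta>3" "zh \<in> proj_set M y" "vec_angle (z - y) (zh - y) \<ge> a" for z y zh
    using fa0 that by blast
  define R where "R = min (min \<delta>1 \<delta>2) (min \<delta>3 e)"
  have R0: "R > 0" using d1 d2 d3 e0 unfolding R_def by auto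
  have projle: "dist z y \<le> dist z w" if "y \<in> proj_set S z" "w \<in> S" for S z y w
    using that unfolding proj_set_def by auto
  have projin: "y \<in> S" if "y \<in> proj_set S z" for S z y
    using that unfolding proj_set_def by auto
  have ybQ: "ybar \<in> Q" using assms(5) by auto
  have step: "(if y \<in> M then y else Phi z y) \<in> M \<and> norm ((if y \<in> M then y else Phi z y) - y) \<le> c * norm (z - y)"
    if zM: "z \<in> M" and zb: "dist z ybar < R / 2" and yP: "y \<in> proj_set Q z" for z y
  proof (cases "y \<in> M")
    case True
    then show ?thesis using c0 by simp
  next
    case False
    have yQ: "y \<in> Q" using projin[OF yP] .
    have zQ: "z \<notin> Q"
    proof
      assume "z \<in> Q"
      then have "dist z y \<le> 0" using projle[OF yP] by force
      then have "y = z" by simp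
      then show False using False zM by simp
    qed
    have dzy: "dist z y \<le> dist z ybar" using projle[OF yP ybQ] .
    have yb: "dist y ybar < R" using dist_triangle[of y ybar z] dzy zb by (simp add: dist_commute)
    have zbR: "dist z ybar < R" using zb R0 by simp
    obtain z' where z'M: "z' \<in> M" and z'min: "\<And>w. w \<in> M \<Longrightarrow> dist y z' \<le> dist y w"
      using distance_attains_inf[OF assms(1) assms(2)] by blast
    have z'P: "z' \<in> proj_set M y" using z'M z'min unfolding proj_set_def by auto
    have ang: "vec_angle (z - y) (z' - y) \<ge> a"
      using sep[of z y z'] zM zQ zbR yP False z'P R_def a_def by force
    have nz1: "z - y \<noteq> 0" using zM False by auto
    have nz2: "z' - y \<noteq> 0" using z'M False by auto
    have i1: "(z - y) \<bullet> (z' - y) \<le> cos a * (norm (z - y) * norm (z' - y))"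
      using angle_le[OF nz1 nz2 _ _ ang] a1 api by simp
    have i2: "(z - z') \<bullet> (y - z') \<le> s * (norm (z - z') * norm (y - z'))"
    proof (cases "z' = z")
      case True then show ?thesis by simp
    next
      case ne: False
      have ang2: "vec_angle (z - z') (y - z') \<ge> pi / 2 - s"
        using sr[OF zM False _ _ z'P] ne zbR yb R_def by (simp add: eq_commute)
      have nz3: "z - z' \<noteq> 0" using ne by simp
      have nz4: "y - z' \<noteq> 0" using z'M False by auto
      have "(z - z') \<bullet> (y - z') \<le> cos (pi / 2 - s) * (norm (z - z') * norm (y - z'))"
        using angle_le[OF nz3 nz4 _ _ ang2] s0 pi_gt3 by simp
      also have "\<dots> \<le> s * (norm (z - z') * norm (y - z'))"
        using sin_x_le_x[of s] s0 by (intro mult_right_mono) (auto simp: cos_diff)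
      finally show ?thesis .
    qed
    have n: "norm (z' - y) \<le> norm (z - y)"
      using z'min[OF zM] by (simp add: dist_norm norm_minus_commute)
    have g: "norm (z' - y) \<le> (cos a + 2 * s) * norm (z - y)"
      using geom[OF n i1 i2] s0 ca0 by simp
    have f: "norm (z' - Phi z y) \<le> eps * norm (y - z)"
      using fa[OF zM False _ _ z'P ang] zbR yb R_def by simp
    have "norm (Phi z y - y) \<le> norm (Phi z y - z') + norm (z' - y)" by (rule tri3)
    also have "\<dots> \<le> eps * norm (z - y) + (cos a + 2 * s) * norm (z - y)"
      using f g by (simp add: norm_minus_commute)
    finally have "norm (Phi z y - y) \<le> c * norm (z - y)" unfolding ceq by (simp add: algebra_simps)
    moreover have "z \<in> V" using eV zM zbR R_def by (auto simp: dist_commute)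
    ultimately show ?thesis using False PhiM by simp
  qed
  define \<delta> where "\<delta> = R * (1 - c) / 4"
  have \<delta>0: "\<delta> > 0" using R0 c0 unfolding \<delta>_def by simp
  show ?thesis
  proof (intro exI[of _ \<delta>] conjI allI impI \<delta>0)
    fix zs :: "nat \<Rightarrow> 'a"
    assume h0: "zs 0 \<in> M" and h1: "dist (zs 0) ybar < \<delta>"
      and h2: "\<forall>k. \<exists>y \<in> proj_set Q (zs k). zs (Suc k) = (if y \<in> M then y else Phi (zs k) y)"
    obtain ys where ys: "\<And>k. ys k \<in> proj_set Q (zs k)"
      and ysn: "\<And>k. zs (Suc k) = (if ys k \<in> M then ys k else Phi (zs k) (ys k))"
      using h2 by metis
    define r0 where "r0 = dist (zs 0) ybar"
    define d0 where "d0 = norm (zs 0 - ys 0)"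
    have d0r: "d0 \<le> r0" using projle[OF ys ybQ] unfolding d0_def r0_def by (simp add: dist_norm)
    have d00: "0 \<le> d0" unfolding d0_def by simp
    have inv: "zs k \<in> M \<and> norm (zs k - ys k) \<le> d0 * c ^ k \<and>
        dist (zs k) ybar \<le> r0 + (1 + c) * d0 * (1 - c ^ k) / (1 - c)" for k
    proof (induction k)
      case 0 then show ?case using h0 unfolding d0_def r0_def by simp
    next
      case (Suc k)
      have ck: "0 \<le> c ^ k" "c ^ k \<le> 1" using c0 by (auto intro: power_le_one)
      have "(1 + c) * d0 * (1 - c ^ k) / (1 - c) \<le> (1 + c) * r0 / (1 - c)"
      proof -
        have "d0 * (1 - c ^ k) \<le> d0" using d00 ck by (simp add: mult_left_le)
        then have "(1 + c) * (d0 * (1 - c ^ k)) \<le> (1 + c) * r0" using d0r c0 by (intro mult_left_mono) auto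
        then show ?thesis using c0 by (simp add: divide_right_mono mult.assoc)
      qed
      then have "dist (zs k) ybar \<le> r0 + (1 + c) * r0 / (1 - c)" using Suc by linarith
      also have "\<dots> = 2 * r0 / (1 - c)" using c0 by (simp add: field_simps)
      also have "\<dots> < 2 * \<delta> / (1 - c)" using h1 c0 unfolding r0_def by (simp add: divide_strict_right_mono)
      also have "\<dots> = R / 2" using c0 unfolding \<delta>_def by (simp add: field_simps)
      finally have zb: "dist (zs k) ybar < R / 2" .
      have st: "zs (Suc k) \<in> M \<and> norm (zs (Suc k) - ys k) \<le> c * norm (zs k - ys k)"
        using step[OF _ zb ys[of k]] Suc ysn[of k] by simp
      have "norm (zs (Suc k) - ys (Suc k)) \<le> norm (zs (Suc k) - ys k)"
        using projle[OF ys[of "Suc k"] projin[OF ys[of k]]] by (simp add: dist_norm)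
      also have "\<dots> \<le> c * norm (zs k - ys k)" using st by simp
      also have "\<dots> \<le> c * (d0 * c ^ k)" using Suc c0 by (intro mult_left_mono) auto
      finally have A: "norm (zs (Suc k) - ys (Suc k)) \<le> d0 * c ^ Suc k" by (simp add: algebra_simps)
      have "norm (zs (Suc k) - zs k) \<le> norm (zs (Suc k) - ys k) + norm (ys k - zs k)"
        by (rule tri3)
      also have "\<dots> \<le> (1 + c) * norm (zs k - ys k)" using st by (simp add: norm_minus_commute algebra_simps)
      also have "\<dots> \<le> (1 + c) * (d0 * c ^ k)" using Suc c0 by (intro mult_left_mono) auto
      finally have mv: "norm (zs (Suc k) - zs k) \<le> (1 + c) * (d0 * c ^ k)" .
      have "dist (zs (Suc k)) ybar \<le> dist (zs (Suc k)) (zs k) + dist (zs k) ybar" by (rule dist_triangle)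
      also have "\<dots> \<le> (1 + c) * (d0 * c ^ k) + (r0 + (1 + c) * d0 * (1 - c ^ k) / (1 - c))"
        using mv Suc by (intro add_mono) (auto simp: dist_norm)
      also have "\<dots> = r0 + (1 + c) * d0 * (1 - c ^ Suc k) / (1 - c)"
        using c0 by (simp add: field_simps)
      finally show ?case using st A by simp
    qed
    have zbk: "dist (zs k) ybar < R / 2" for k
    proof -
      have ck: "0 \<le> c ^ k" "c ^ k \<le> 1" using c0 by (auto intro: power_le_one)
      have "(1 + c) * d0 * (1 - c ^ k) / (1 - c) \<le> (1 + c) * r0 / (1 - c)"
      proof -
        have "d0 * (1 - c ^ k) \<le> d0" using d00 ck by (simp add: mult_left_le)
        then have "(1 + c) * (d0 * (1 - c ^ k)) \<le> (1 + c) * r0" using d0r c0 by (intro mult_left_mono) auto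
        then show ?thesis using c0 by (simp add: divide_right_mono mult.assoc)
      qed
      then have "dist (zs k) ybar \<le> r0 + (1 + c) * r0 / (1 - c)" using inv[of k] by linarith
      also have "\<dots> = 2 * r0 / (1 - c)" using c0 by (simp add: field_simps)
      also have "\<dots> < 2 * \<delta> / (1 - c)" using h1 c0 unfolding r0_def by (simp add: divide_strict_right_mono)
      also have "\<dots> = R / 2" using c0 unfolding \<delta>_def by (simp add: field_simps)
      finally show ?thesis .
    qed
    have mv: "norm (zs (Suc k) - zs k) \<le> (1 + c) * (d0 * c ^ k)" for k
    proof -
      have st: "zs (Suc k) \<in> M \<and> norm (zs (Suc k) - ys k) \<le> c * norm (zs k - ys k)"
        using step[OF _ zbk[of k] ys[of k]] inv[of k] ysn[of k] by simp
      have "norm (zs (Suc k) - zs k) \<le> norm (zs (Suc k) - ys k) + norm (ys k - zs k)"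
        by (rule tri3)
      also have "\<dots> \<le> (1 + c) * norm (zs k - ys k)" using st by (simp add: norm_minus_commute algebra_simps)
      also have "\<dots> \<le> (1 + c) * (d0 * c ^ k)" using inv[of k] c0 by (intro mult_left_mono) auto
      finally show ?thesis .
    qed
    define B0 where "B0 = (1 + c) * d0 / (1 - c)"
    have B00: "0 \<le> B0" using c0 d00 unfolding B0_def by simp
    have cau: "norm (zs m - zs k) \<le> B0 * c ^ k - B0 * c ^ m" if "k \<le> m" for k m
      using that
    proof (induction m rule: dec_induct)
      case base then show ?case by simp
    next
      case (step m)
      have "norm (zs (Suc m) - zs k) \<le> norm (zs (Suc m) - zs m) + norm (zs m - zs k)"
        by (rule tri3)
      also have "\<dots> \<le> (1 + c) * (d0 * c ^ m) + (B0 * c ^ k - B0 * c ^ m)"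
        using mv[of m] step.IH by (rule add_mono)
      also have "\<dots> = B0 * c ^ k - B0 * c ^ Suc m"
      proof -
        have h: "B0 * (1 - c) = (1 + c) * d0" using c0 unfolding B0_def by simp
        have "(1 + c) * (d0 * c ^ m) = (B0 * (1 - c)) * c ^ m" unfolding h by (simp add: mult.assoc)
        then show ?thesis by (simp add: algebra_simps)
      qed
      finally show ?case .
    qed
    have cau2: "norm (zs m - zs k) \<le> B0 * c ^ k" if "k \<le> m" for k m
      using cau[OF that] B00 c0 by (smt (verit) mult_nonneg_nonneg zero_le_power)
    have "Cauchy zs"
      unfolding Cauchy_def
    proof (intro allI impI)
      fix \<epsilon> :: real assume ep: "\<epsilon> > 0"
      obtain N where N: "c ^ N < \<epsilon> / (2 * (B0 + 1))"
        using real_arch_pow_inv[of "\<epsilon> / (2 * (B0 + 1))" c] ep B00 c0 by auto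
      have "B0 * c ^ N \<le> (B0 + 1) * c ^ N" using c0 by simp
      also have "\<dots> < (B0 + 1) * (\<epsilon> / (2 * (B0 + 1)))" using N B00 by (intro mult_strict_left_mono) auto
      also have "\<dots> = \<epsilon> / 2" using B00 by (simp add: field_simps)
      finally have BN: "B0 * c ^ N < \<epsilon> / 2" .
      show "\<exists>M. \<forall>m\<ge>M. \<forall>n\<ge>M. dist (zs m) (zs n) < \<epsilon>"
      proof (intro exI[of _ N] allI impI)
        fix m n assume "N \<le> m" "N \<le> n"
        then have "norm (zs m - zs N) \<le> B0 * c ^ N" "norm (zs n - zs N) \<le> B0 * c ^ N"
          using cau2 by auto
        then show "dist (zs m) (zs n) < \<epsilon>"
          using dist_triangle[of "zs m" "zs n" "zs N"] BN by (simp add: dist_norm norm_minus_commute)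
      qed
    qed
    then obtain zh where lim: "zs \<longlonglongrightarrow> zh" using Cauchy_convergent convergent_def by blast
    have zhM: "zh \<in> M" using closed_sequentially[OF assms(1) _ lim] inv by blast
    have "(\<lambda>k. d0 * c ^ k) \<longlonglongrightarrow> d0 * 0"
      using c0 by (intro tendsto_mult tendsto_const LIMSEQ_power_zero) auto
    then have lim0: "(\<lambda>k. d0 * c ^ k) \<longlonglongrightarrow> 0" by simp
    have nb: "\<forall>k. norm (ys k - zs k) \<le> d0 * c ^ k"
      using inv by (metis norm_minus_commute)
    have "(\<lambda>k. ys k - zs k) \<longlonglongrightarrow> 0"
      by (rule Lim_null_comparison[OF always_eventually[OF nb] lim0])
    then have "(\<lambda>k. zs k + (ys k - zs k)) \<longlonglongrightarrow> zh + 0" using lim by (intro tendsto_add)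
    then have limy: "ys \<longlonglongrightarrow> zh" by simp
    have zhQ: "zh \<in> Q" using closed_sequentially[OF assms(3) _ limy] projin[OF ys] by blast
    have bnd: "norm (zs k - zh) \<le> B0 * c ^ k" for k
    proof -
      have "(\<lambda>m. norm (zs m - zs k)) \<longlonglongrightarrow> norm (zh - zs k)"
        using lim by (intro tendsto_norm tendsto_diff tendsto_const)
      then have "norm (zh - zs k) \<le> B0 * c ^ k"
        by (rule LIMSEQ_le_const2) (use cau2 in blast)
      then show ?thesis by (simp add: norm_minus_commute)
    qed
    have lt: "norm (zs k - zh) < (B0 + 1) * c ^ k" for k
    proof -
      have "B0 * c ^ k < (B0 + 1) * c ^ k" using c0 by simp
      then show ?thesis using bnd[of k] by linarith
    qed
    have "converges_linearly zs zh"
      unfolding converges_linearly_def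
      using c0 B00 lt by (intro exI[of _ c] exI[of _ "B0 + 1"]) auto
    then show "\<exists>zh \<in> M \<inter> Q. converges_linearly zs zh" using zhM zhQ by blast
  qed
qed

end
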